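(* Let $\hat q$ be an $n\times n$ and $\hat p$ an $m\times m$ parametric matrix and let $M$ be an $n\times m$ $(\hat q,\hat p)$-Manin matrix over $\mathfrak R$. Then for every $k\ge1$ the following identities hold in $\mathrm{Hom}((\mathbb C^m)^{\otimes k},(\mathbb C^n)^{\otimes k})\otimes\mathfrak R$: $$A_{\hat q}^{(k)}M_1\cdots M_k=A_{\hat q}^{(k)}M_1\cdots M_kA_{\hat p}^{(k)},\qquad M_1\cdots M_kS_{\hat p}^{(k)}=S_{\hat q}^{(k)}M_1\cdots M_kS_{\hat p}^{(k)}.$$
   Context: $\mathfrak R$ is an associative unital algebra over $\mathbb C$. A parametric $n\times n$ matrix is a matrix $\hat q=(q_{ij})$ of nonzero complex numbers with $q_{ij}q_{ji}=1$, $q_{ii}=1$. An $n\times m$ matrix $M$ over $\mathfrak R$ is a $(\hat q,\hat p)$-Manin matrix if $M_{ik}M_{jk}=q_{ji}M_{jk}M_{ik}$ for $1\le i<j\le n$, $1\le k\le m$, and $M_{ik}M_{jl}-q_{ji}p_{kl}M_{jl}M_{ik}+p_{kl}M_{il}M_{jk}-q_{ji}M_{jk}M_{il}=0$ for $i<j$, $k<l$. Let $E_{ij}$ be matrix units and $P_{\hat q}=\sum_{i,j=1}^nq_{ji}E_{ij}\otimes E_{ji}\in\mathrm{End}(\mathbb C^n\otimes\mathbb C^n)$ (so $P_{\hat q}^2=1$). The assignment $s_i=(i,i+1)\mapsto P_{\hat q}^{(i,i+1)}$ ($P_{\hat q}$ acting on tensor factors $i,i+1$ of $(\mathbb C^n)^{\otimes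 k}$) defines an action of $S_k$; write $P_{\hat q}^{\sigma}$ for the image of $\sigma\in S_k$. Set $S_{\hat q}^{(k)}=\frac1{k!}\sum_{\sigma\in S_k}P_{\hat q}^{\sigma}$ and $A_{\hat q}^{(k)}=\frac1{k!}\sum_{\sigma\in S_k}\mathrm{sgn}(\sigma)P_{\hat q}^{\sigma}$; similarly for $\hat p$ on $(\mathbb C^m)^{\otimes k}$. $M_a$ denotes $M$ acting on the $a$-th tensor factor, i.e. $1^{\otimes(a-1)}\otimes M\otimes1^{\otimes(k-a)}\in\mathrm{Hom}((\mathbb C^m)^{\otimes k},(\mathbb C^n)^{\otimes k})\otimes\mathfrak R$. *)

theory Defs
  imports Complex_Main "HOL-Combinatorics.Permutations" "HOL-Combinatorics.Transposition"
begin

text \<open>The algebra R is a unital ring 'r together with a unital ring homomorphism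
  emb from the complex numbers into the centre of 'r (this is exactly a unital
  associative C-algebra structure).  Indices are 0-based.\<close>

definition is_C_algebra :: "(complex \<Rightarrow> 'r::ring_1) \<Rightarrow> bool" where
  "is_C_algebra emb \<longleftrightarrow> emb 1 = 1 \<and> (\<forall>a b. emb (a + b) = emb a + emb b)
     \<and> (\<forall>a b. emb (a * b) = emb a * emb b) \<and> (\<forall>a x. emb a * x = x * emb a)"

definition parametric_mat :: "nat \<Rightarrow> (nat \<Rightarrow> nat \<Rightarrow> complex) \<Rightarrow> bool" where
  "parametric_mat n q \<longleftrightarrow> (\<forall>i<n. \<forall>j<n. q i j \<noteq> 0 \<and> q i j * q j i = 1) \<and> (\<forall>i<n. q i i = 1)"

definition manin :: "(complex \<Rightarrow> 'r::ring_1) \<Rightarrow> nat \<Rightarrow> nat \<Rightarrow> (nat \<Rightarrow> nat \<Rightarrow> complex)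
    \<Rightarrow> (nat \<Rightarrow> nat \<Rightarrow> complex) \<Rightarrow> (nat \<Rightarrow> nat \<Rightarrow> 'r) \<Rightarrow> bool" where
  "manin emb n m q p M \<longleftrightarrow>
     (\<forall>i j k. i < j \<and> j < n \<and> k < m \<longrightarrow> M i k * M j k = emb (q j i) * M j k * M i k) \<and>
     (\<forall>i j k l. i < j \<and> j < n \<and> k < l \<and> l < m \<longrightarrow>
        M i k * M j l - emb (q j i * p k l) * M j l * M i k + emb (p k l) * M i l * M j k
          - emb (q j i) * M j k * M i l = 0)"

text \<open>Multi-indices: lists of length k with entries < d (basis of (C^d)^{\<otimes>k}).
  Elements of Hom((C^m)^{\<otimes>k},(C^n)^{\<otimes>k}) \<otimes> R are represented by their
  matrix entries, functions of a row and a column multi-index.\<close>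

definition tuples :: "nat \<Rightarrow> nat \<Rightarrow> nat list set" where
  "tuples d k = {I. length I = k \<and> set I \<subseteq> {..<d}}"

definition matmul :: "nat \<Rightarrow> (nat list \<Rightarrow> nat list \<Rightarrow> 'r::ring_1)
    \<Rightarrow> (nat list \<Rightarrow> nat list \<Rightarrow> 'r) \<Rightarrow> nat list \<Rightarrow> nat list \<Rightarrow> 'r" where
  "matmul d X Y = (\<lambda>I J. \<Sum>L\<in>tuples d (length I). X I L * Y L J)"

definition idmat :: "nat list \<Rightarrow> nat list \<Rightarrow> 'r::ring_1" where
  "idmat = (\<lambda>I J. if I = J then 1 else 0)"

text \<open>P_q acting on tensor factors i, i+1 (0-based): P_q (e_b \<otimes> e_a) = q_{ba} e_a \<otimes> e_b.\<close>
definition adjP :: "(complex \<Rightarrow> 'r::ring_1) \<Rightarrow> (nat \<Rightarrow> nat \<Rightarrow> complex) \<Rightarrow> nat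
    \<Rightarrow> nat list \<Rightarrow> nat list \<Rightarrow> 'r" where
  "adjP emb q i = (\<lambda>I J. if Suc i < length I \<and> J = I[i := I ! Suc i, Suc i := I ! i]
                          then emb (q (I ! Suc i) (I ! i)) else 0)"

definition Pword :: "(complex \<Rightarrow> 'r::ring_1) \<Rightarrow> nat \<Rightarrow> (nat \<Rightarrow> nat \<Rightarrow> complex) \<Rightarrow> nat list
    \<Rightarrow> nat list \<Rightarrow> nat list \<Rightarrow> 'r" where
  "Pword emb d q ws = foldr (\<lambda>i A. matmul d (adjP emb q i) A) ws idmat"

definition perm_word :: "nat list \<Rightarrow> nat \<Rightarrow> nat" where
  "perm_word ws = foldr (\<lambda>i f. transpose i (Suc i) \<circ> f) ws id"

text \<open>P^\<sigma> for \<sigma> a permutation of {0..<k}: the image of any word in the adjacent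
  transpositions representing \<sigma> (well defined since s_i \<mapsto> P^{(i,i+1)} is an action).\<close>
definition Psigma :: "(complex \<Rightarrow> 'r::ring_1) \<Rightarrow> nat \<Rightarrow> (nat \<Rightarrow> nat \<Rightarrow> complex) \<Rightarrow> nat
    \<Rightarrow> (nat \<Rightarrow> nat) \<Rightarrow> nat list \<Rightarrow> nat list \<Rightarrow> 'r" where
  "Psigma emb d q k \<sigma> = Pword emb d q
     (SOME ws. set ws \<subseteq> {i. Suc i < k} \<and> perm_word ws = \<sigma>)"

definition Symm :: "(complex \<Rightarrow> 'r::ring_1) \<Rightarrow> nat \<Rightarrow> (nat \<Rightarrow> nat \<Rightarrow> complex) \<Rightarrow> nat
    \<Rightarrow> nat list \<Rightarrow> nat list \<Rightarrow> 'r" where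
  "Symm emb d q k = (\<lambda>I J. emb (1 / of_nat (fact k)) *
      (\<Sum>\<sigma>\<in>{\<sigma>. \<sigma> permutes {..<k}}. Psigma emb d q k \<sigma> I J))"

definition Antisymm :: "(complex \<Rightarrow> 'r::ring_1) \<Rightarrow> nat \<Rightarrow> (nat \<Rightarrow> nat \<Rightarrow> complex) \<Rightarrow> nat
    \<Rightarrow> nat list \<Rightarrow> nat list \<Rightarrow> 'r" where
  "Antisymm emb d q k = (\<lambda>I J. emb (1 / of_nat (fact k)) *
      (\<Sum>\<sigma>\<in>{\<sigma>. \<sigma> permutes {..<k}}. emb (of_int (sign \<sigma>)) * Psigma emb d q k \<sigma> I J))"

text \<open>M_1 M_2 ... M_k: entry (I,J) is M_{I1 J1} M_{I2 J2} ... M_{Ik Jk} (ordered product).\<close>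
definition Mtensor :: "(nat \<Rightarrow> nat \<Rightarrow> 'r::ring_1) \<Rightarrow> nat list \<Rightarrow> nat list \<Rightarrow> 'r" where
  "Mtensor M = (\<lambda>I J. prod_list (map2 M I J))"

end

theory Submission
  imports Defs
begin



lemma finite_tuples[simp]: "finite (tuples d k)"
proof -
  have "tuples d k = {xs. set xs \<subseteq> {..<d} \<and> length xs = k}" by (auto simp: tuples_def)
  then show ?thesis using finite_lists_length_eq[of "{..<d}" k] by simp
qed

lemma matmul_assoc:
  "matmul d2 (matmul d1 X Y) Z I J = matmul d1 X (matmul d2 Y Z) I J"
proof -
  have "matmul d2 (matmul d1 X Y) Z I J
      = (\<Sum>L\<in>tuples d2 (length I). \<Sum>L'\<in>tuples d1 (length I). X I L' * Y L' L * Z L J)"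
    by (simp add: matmul_def sum_distrib_right)
  also have "\<dots> = (\<Sum>L'\<in>tuples d1 (length I). \<Sum>L\<in>tuples d2 (length I). X I L' * Y L' L * Z L J)"
    by (rule sum.swap)
  also have "\<dots> = matmul d1 X (matmul d2 Y Z) I J"
    by (auto simp: matmul_def sum_distrib_left mult.assoc tuples_def intro!: sum.cong)
  finally show ?thesis .
qed

lemma matmul_cong:
  assumes "\<And>L. L \<in> tuples d (length I) \<Longrightarrow> X I L = X' I L"
    and "\<And>L. L \<in> tuples d (length I) \<Longrightarrow> Y L J = Y' L J"
  shows "matmul d X Y I J = matmul d X' Y' I J"
  using assms by (simp add: matmul_def)

lemma matmul_add_right:
  "matmul d X (\<lambda>I J. Y I J + Z I J) I J = matmul d X Y I J + matmul d X Z I J"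
  by (simp add: matmul_def distrib_left sum.distrib)
lemma matmul_diff_right:
  "matmul d X (\<lambda>I J. Y I J - Z I J) I J = matmul d X Y I J - matmul d X Z I J"
  by (simp add: matmul_def right_diff_distrib sum_subtractf)
lemma matmul_add_left:
  "matmul d (\<lambda>I J. Y I J + Z I J) X I J = matmul d Y X I J + matmul d Z X I J"
  by (simp add: matmul_def distrib_right sum.distrib)
lemma matmul_diff_left:
  "matmul d (\<lambda>I J. Y I J - Z I J) X I J = matmul d Y X I J - matmul d Z X I J"
  by (simp add: matmul_def left_diff_distrib sum_subtractf)
lemma matmul_uminus_left:
  "matmul d (\<lambda>I J. - Y I J) X I J = - matmul d Y X I J"
  by (simp add: matmul_def sum_negf)

lemma matmul_id_left:
  assumes "I \<in> tuples d k" shows "matmul d idmat X I J = X I J"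
proof -
  have "I \<in> tuples d (length I)" using assms by (simp add: tuples_def)
  moreover have "(\<Sum>L\<in>tuples d (length I). (if I = L then 1 else 0) * X L J)
     = (\<Sum>L\<in>tuples d (length I). if I = L then X L J else 0)" by (rule sum.cong) auto
  ultimately show ?thesis by (simp add: matmul_def idmat_def)
qed

lemma matmul_id_right:
  assumes "J \<in> tuples d (length I)" shows "matmul d X idmat I J = X I J"
proof -
  have "(\<Sum>L\<in>tuples d (length I). X I L * (if L = J then 1 else 0))
     = (\<Sum>L\<in>tuples d (length I). if L = J then X I L else 0)" by (rule sum.cong) auto
  then show ?thesis using assms by (simp add: matmul_def idmat_def)
qed




context
  fixes emb :: "complex \<Rightarrow> 'r::ring_1"
  assumes E: "is_C_algebra emb"
begin

lemma emb_1[simp]: "emb 1 = 1" using E[unfolded is_C_algebra_def] by (rule conjunct1)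
lemma emb_add: "emb (a + b) = emb a + emb b"
proof -
  have "\<forall>a b. emb (a + b) = emb a + emb b" using E unfolding is_C_algebra_def by (elim conjE) assumption
  then show ?thesis by blast
qed
lemma emb_mult: "emb (a * b) = emb a * emb b"
proof -
  have "\<forall>a b. emb (a * b) = emb a * emb b" using E unfolding is_C_algebra_def by (elim conjE) assumption
  then show ?thesis by blast
qed
lemma emb_comm: "emb a * x = x * emb a"
proof -
  have "\<forall>a x. emb a * x = x * emb a" using E unfolding is_C_algebra_def by (elim conjE) assumption
  then show ?thesis by blast
qed
lemma emb_0[simp]: "emb 0 = 0"
proof -
  have "emb 0 + emb 0 = emb 0 + 0" using emb_add[of 0 0] by simp
  then show ?thesis by (rule add_left_imp_eq)
qed
lemma emb_uminus: "emb (- a) = - emb a"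
proof -
  have "emb a + emb (-a) = emb a + (- emb a)" using emb_add[of a "-a"] by simp
  then show ?thesis by (rule add_left_imp_eq)
qed
lemma emb_diff: "emb (a - b) = emb a - emb b"
  using emb_add[of a "-b"] emb_uminus[of b] by simp
lemma emb_of_nat: "emb (of_nat j) = of_nat j"
  by (induction j) (simp_all add: emb_add)
lemma emb_of_int: "emb (of_int j) = of_int j"
proof (cases j)
  case (nonneg n) then show ?thesis by (simp add: emb_of_nat)
next
  case (neg n) then show ?thesis
    using emb_uminus[of "of_nat (Suc n)"] emb_of_nat[of "Suc n"] by (simp only: of_int_minus of_int_of_nat_eq)
qed
lemma emb_central: "x * (emb a * y) = emb a * (x * y)"
proof -
  have "x * (emb a * y) = (x * emb a) * y" by (simp add: mult.assoc)
  also have "\<dots> = (emb a * x) * y" using emb_comm[of a x] by simp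
  finally show ?thesis by (simp add: mult.assoc)
qed
lemma emb_inv: "a * b = 1 \<Longrightarrow> emb a * emb b = 1"
  by (simp add: emb_mult[symmetric])

end



definition swapl :: "nat \<Rightarrow> nat list \<Rightarrow> nat list" where
  "swapl i L = L[i := L ! Suc i, Suc i := L ! i]"

lemma swapl_length[simp]: "length (swapl i L) = length L"
  by (simp add: swapl_def)

lemma swapl_nth: "Suc i < length L \<Longrightarrow> x < length L \<Longrightarrow> swapl i L ! x = L ! transpose i (Suc i) x"
  by (auto simp: swapl_def nth_list_update transpose_def)

lemma swapl_swapl: "Suc i < length L \<Longrightarrow> swapl i (swapl i L) = L"
proof (rule nth_equalityI)
  fix x assume a: "Suc i < length L" "x < length (swapl i (swapl i L))"
  have t: "transpose i (Suc i) x < length L" using a by (auto simp: transpose_def)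
  show "swapl i (swapl i L) ! x = L ! x"
    using a t by (simp add: swapl_nth)
qed simp

lemma swapl_tuples: "L \<in> tuples d k \<Longrightarrow> Suc i < k \<Longrightarrow> swapl i L \<in> tuples d k"
proof -
  assume a: "L \<in> tuples d k" "Suc i < k"
  have "set (swapl i L) \<subseteq> set L"
  proof
    fix x assume "x \<in> set (swapl i L)"
    then obtain j where "j < length L" "swapl i L ! j = x" by (auto simp: in_set_conv_nth)
    then show "x \<in> set L" using a by (auto simp: swapl_nth tuples_def transpose_def split: if_splits)
  qed
  then show ?thesis using a by (auto simp: tuples_def)
qed

lemma adjP_left:
  assumes "Suc i < k" "I \<in> tuples d k"
  shows "matmul d (adjP emb q i) X I J = emb (q (I ! Suc i) (I ! i)) * X (swapl i I) J"
proof -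
  have len: "length I = k" using assms by (simp add: tuples_def)
  have "matmul d (adjP emb q i) X I J
      = (\<Sum>L\<in>tuples d k. if L = swapl i I then emb (q (I ! Suc i) (I ! i)) * X L J else 0)"
    unfolding matmul_def adjP_def len using assms len
    by (intro sum.cong) (auto simp: swapl_def)
  also have "\<dots> = emb (q (I ! Suc i) (I ! i)) * X (swapl i I) J"
    using swapl_tuples[OF assms(2,1)] by (simp add: sum.delta')
  finally show ?thesis .
qed

lemma adjP_right:
  assumes "Suc i < k" "J \<in> tuples d k" "length I = k"
  shows "matmul d X (adjP emb q i) I J = X I (swapl i J) * emb (q (J ! i) (J ! Suc i))"
proof -
  have lenJ: "length J = k" using assms by (simp add: tuples_def)
  have "matmul d X (adjP emb q i) I J
      = (\<Sum>L\<in>tuples d k. if L = swapl i J then X I L * emb (q (J ! i) (J ! Suc i)) else 0)"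
    unfolding matmul_def adjP_def assms(3)
  proof (intro sum.cong refl)
    fix L assume L: "L \<in> tuples d k"
    then have lL: "length L = k" by (simp add: tuples_def)
    have eq: "(J = L[i := L ! Suc i, Suc i := L ! i]) = (L = swapl i J)"
      using swapl_swapl[of i L] swapl_swapl[of i J] lL lenJ assms(1)
      unfolding swapl_def[symmetric] by auto
    show "X I L * (if Suc i < length L \<and> J = L[i := L ! Suc i, Suc i := L ! i]
             then emb (q (L ! Suc i) (L ! i)) else 0)
        = (if L = swapl i J then X I L * emb (q (J ! i) (J ! Suc i)) else 0)"
      using eq lL assms(1) lenJ by (auto simp: swapl_nth)
  qed
  also have "\<dots> = X I (swapl i J) * emb (q (J ! i) (J ! Suc i))"
    using swapl_tuples[OF assms(2,1)] by (simp add: sum.delta')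
  finally show ?thesis .
qed

lemma Mtensor_split:
  assumes "length A = length C"
  shows "Mtensor M (A @ x # y # B) (C @ z # w # D) = Mtensor M A C * (M x z * M y w) * Mtensor M B D"
  using assms by (simp add: Mtensor_def mult.assoc)

lemma list_split2: "Suc i < length L \<Longrightarrow> L = take i L @ L ! i # L ! Suc i # drop (Suc (Suc i)) L"
  by (metis Cons_nth_drop_Suc Suc_lessD append_take_drop_id)

lemma swapl_split2: "Suc i < length L \<Longrightarrow> swapl i L = take i L @ L ! Suc i # L ! i # drop (Suc (Suc i)) L"
proof -
  assume a: "Suc i < length L"
  have "swapl i L = take i (swapl i L) @ swapl i L ! i # swapl i L ! Suc i # drop (Suc (Suc i)) (swapl i L)"
    using list_split2[of i "swapl i L"] a by simp
  moreover have "take i (swapl i L) = take i L" "drop (Suc (Suc i)) (swapl i L) = drop (Suc (Suc i)) L"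
    by (simp_all add: swapl_def)
  ultimately show ?thesis using a by (simp add: swapl_nth)
qed




definition LM :: "(complex \<Rightarrow> 'r::ring_1) \<Rightarrow> (nat \<Rightarrow> nat \<Rightarrow> complex) \<Rightarrow> (nat \<Rightarrow> nat \<Rightarrow> complex)
   \<Rightarrow> (nat \<Rightarrow> nat \<Rightarrow> 'r) \<Rightarrow> nat \<Rightarrow> nat \<Rightarrow> nat \<Rightarrow> nat \<Rightarrow> 'r" where
  "LM emb q p M a b c d = M a c * M b d - emb (q b a) * (M b c * M a d) + emb (p c d) * (M a d * M b c)
     - emb (q b a) * (emb (p c d) * (M b d * M a c))"

context
  fixes emb :: "complex \<Rightarrow> 'r::ring_1"
  assumes E: "is_C_algebra emb"
begin

lemma LM_R1:
  assumes "q a b * q b a = 1"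
  shows "LM emb q p M a b c d = - (emb (q b a) * LM emb q p M b a c d)"
proof -
  have h: "emb (q b a) * (emb (q a b) * x) = x" for x
    using emb_inv[OF E, of "q b a" "q a b"] assms by (simp add: mult.assoc[symmetric] mult.commute)
  show ?thesis unfolding LM_def by (simp add: algebra_simps h)
qed

lemma LM_R2:
  assumes "p c d * p d c = 1"
  shows "LM emb q p M a b c d = emb (p c d) * LM emb q p M a b d c"
proof -
  have h: "emb (p c d) * (emb (p d c) * x) = x" for x
    using emb_inv[OF E, of "p c d" "p d c"] assms by (simp add: mult.assoc[symmetric])
  have h2: "emb (p c d) * (emb (q b a) * x) = emb (q b a) * (emb (p c d) * x)" for x
    by (simp add: mult.assoc[symmetric] emb_mult[OF E, symmetric] mult.commute)
  show ?thesis unfolding LM_def by (simp add: algebra_simps h h2)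
qed

lemma LM_ordered:
  assumes "manin emb n m q p M" "a < b" "b < n" "c < d" "d < m"
  shows "LM emb q p M a b c d = 0"
proof -
  have "M a c * M b d - emb (q b a * p c d) * M b d * M a c + emb (p c d) * M a d * M b c
          - emb (q b a) * M b c * M a d = 0"
    using assms unfolding manin_def by blast
  moreover have h2: "emb (p c d) * (emb (q b a) * x) = emb (q b a) * (emb (p c d) * x)" for x
    by (simp add: mult.assoc[symmetric] emb_mult[OF E, symmetric] mult.commute)
  ultimately show ?thesis unfolding LM_def
    by (simp add: emb_mult[OF E] mult.assoc algebra_simps h2)
qed

lemma LM_same_row:
  assumes "q a a = 1" "p c c = 1"
  shows "LM emb q p M a a c d = 0"
  unfolding LM_def using assms by (simp add: emb_1[OF E])

lemma LM_same_col:
  assumes "manin emb n m q p M" "parametric_mat n q" "a < n" "b < n" "c < m" "p c c = 1"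
  shows "LM emb q p M a b c c = 0"
proof -
  have key: "emb (q b a) * (M b c * M a c) = M a c * M b c"
  proof (cases a b rule: linorder_cases)
    case less
    then have "M a c * M b c = emb (q b a) * M b c * M a c"
      using assms unfolding manin_def by blast
    then show ?thesis by (simp add: mult.assoc)
  next
    case equal
    then show ?thesis using assms(2,3) by (simp add: parametric_mat_def emb_1[OF E])
  next
    case greater
    then have "M b c * M a c = emb (q a b) * M a c * M b c"
      using assms unfolding manin_def by blast
    moreover have "emb (q b a) * emb (q a b) = 1"
      using emb_inv[OF E] assms(2,3,4) unfolding parametric_mat_def by (metis mult.commute)
    ultimately show ?thesis by (simp add: mult.assoc[symmetric])
  qed
  show ?thesis unfolding LM_def using assms(6) key by (simp add: emb_1[OF E])
qed

lemma LM_zero: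
  assumes "manin emb n m q p M" "parametric_mat n q" "parametric_mat m p"
    "a < n" "b < n" "c < m" "d < m"
  shows "LM emb q p M a b c d = 0"
proof -
  have qd: "q x x = 1" if "x < n" for x using assms(2) that by (simp add: parametric_mat_def)
  have pd: "p x x = 1" if "x < m" for x using assms(3) that by (simp add: parametric_mat_def)
  have qi: "q x y * q y x = 1" if "x < n" "y < n" for x y using assms(2) that by (simp add: parametric_mat_def)
  have pi: "p x y * p y x = 1" if "x < m" "y < m" for x y using assms(3) that by (simp add: parametric_mat_def)
  have ord: "LM emb q p M x y z w = 0" if "x < y" "y < n" "z \<noteq> w" "z < m" "w < m" for x y z w
  proof (cases "z < w")
    case True then show ?thesis using LM_ordered[OF assms(1)] that by blast
  next
    case False then have "w < z" using that by simp
    then have "LM emb q p M x y w z = 0" using LM_ordered[OF assms(1)] that by blast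
    then show ?thesis using LM_R2[of p z w q M x y] pi[of z w] that by simp
  qed
  show ?thesis
  proof (cases "a = b")
    case True then show ?thesis using LM_same_row qd pd assms by blast
  next
    case ab: False
    show ?thesis
    proof (cases "c = d")
      case True then show ?thesis using LM_same_col[OF assms(1,2)] pd assms by blast
    next
      case cd: False
      show ?thesis
      proof (cases "a < b")
        case True then show ?thesis using ord cd assms by blast
      next
        case False then have "b < a" using ab by simp
        then have "LM emb q p M b a c d = 0" using ord cd assms by blast
        then show ?thesis using LM_R1[of q a b p M c d] qi[of a b] assms by simp
      qed
    qed
  qed
qed

end



context
  fixes emb :: "complex \<Rightarrow> 'r::ring_1"
  assumes E: "is_C_algebra emb"
begin

lemma scal_in: "emb e * (P * X * S) = P * (emb e * X) * S"
  by (simp add: mult.assoc emb_central[OF E])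

lemma scal_in2: "P * X * S * emb f = P * (emb f * X) * S"
proof -
  have "P * X * S * emb f = P * X * (emb f * S)" by (simp add: mult.assoc emb_comm[OF E])
  also have "\<dots> = P * (X * emb f) * S" by (simp add: mult.assoc)
  also have "\<dots> = P * (emb f * X) * S" by (simp add: emb_comm[OF E])
  finally show ?thesis .
qed

lemma local_manin:
  assumes man: "manin emb n m q p M" and pq: "parametric_mat n q" and pp: "parametric_mat m p"
    and i: "Suc i < k" and I: "I \<in> tuples n k" and J: "J \<in> tuples m k"
  shows "Mtensor M I J - emb (q (I ! Suc i) (I ! i)) * Mtensor M (swapl i I) J
     + Mtensor M I (swapl i J) * emb (p (J ! i) (J ! Suc i))
     - emb (q (I ! Suc i) (I ! i)) * Mtensor M (swapl i I) (swapl i J) * emb (p (J ! i) (J ! Suc i)) = 0"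
proof -
  have lI: "length I = k" and lJ: "length J = k" using I J by (auto simp: tuples_def)
  define a b c d where "a = I ! i" "b = I ! Suc i" "c = J ! i" "d = J ! Suc i"
  define P S where "P = Mtensor M (take i I) (take i J)"
    "S = Mtensor M (drop (Suc (Suc i)) I) (drop (Suc (Suc i)) J)"
  have lt: "length (take i I) = length (take i J)" using lI lJ by simp
  have m1: "Mtensor M I J = P * (M a c * M b d) * S"
    using list_split2[of i I] list_split2[of i J] i lI lJ Mtensor_split[OF lt]
    unfolding P_S_def a_b_c_d_def by metis
  have m2: "Mtensor M (swapl i I) J = P * (M b c * M a d) * S"
    using swapl_split2[of i I] list_split2[of i J] i lI lJ Mtensor_split[OF lt]
    unfolding P_S_def a_b_c_d_def by metis
  have m3: "Mtensor M I (swapl i J) = P * (M a d * M b c) * S"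
    using list_split2[of i I] swapl_split2[of i J] i lI lJ Mtensor_split[OF lt]
    unfolding P_S_def a_b_c_d_def by metis
  have m4: "Mtensor M (swapl i I) (swapl i J) = P * (M b d * M a c) * S"
    using swapl_split2[of i I] swapl_split2[of i J] i lI lJ Mtensor_split[OF lt]
    unfolding P_S_def a_b_c_d_def by metis
  have "I ! i \<in> set I" "I ! Suc i \<in> set I" "J ! i \<in> set J" "J ! Suc i \<in> set J"
    using i lI lJ by (auto intro!: nth_mem)
  then have "a < n" "b < n" "c < m" "d < m" using I J unfolding a_b_c_d_def tuples_def
    by auto
  then have lm: "LM emb q p M a b c d = 0" using LM_zero[OF E man pq pp] by blast
  have "Mtensor M I J - emb (q b a) * Mtensor M (swapl i I) J
     + Mtensor M I (swapl i J) * emb (p c d)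
     - emb (q b a) * Mtensor M (swapl i I) (swapl i J) * emb (p c d)
     = P * (M a c * M b d) * S - P * (emb (q b a) * (M b c * M a d)) * S
       + P * (emb (p c d) * (M a d * M b c)) * S
       - P * (emb (q b a) * (emb (p c d) * (M b d * M a c))) * S"
  proof -
    have h2: "emb (p c d) * (emb (q b a) * x) = emb (q b a) * (emb (p c d) * x)" for x
      by (simp add: mult.assoc[symmetric] emb_mult[OF E, symmetric] mult.commute)
    show ?thesis
      unfolding m1 m2 m3 m4 scal_in scal_in2 by (simp add: scal_in[symmetric] mult.assoc h2)
  qed
  also have "\<dots> = P * LM emb q p M a b c d * S" unfolding LM_def by (simp add: algebra_simps)
  also have "\<dots> = 0" using lm by simp
  finally show ?thesis unfolding a_b_c_d_def .
qed

end



lemma foldr_perm_word: "foldr (\<lambda>i f. transpose i (Suc i) \<circ> f) ws g = perm_word ws \<circ> g"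
  by (induction ws) (simp_all add: perm_word_def o_assoc)

lemma perm_word_Nil[simp]: "perm_word [] = id" by (simp add: perm_word_def)
lemma perm_word_Cons: "perm_word (i # ws) = transpose i (Suc i) \<circ> perm_word ws"
  by (simp add: perm_word_def)
lemma perm_word_append: "perm_word (ws @ vs) = perm_word ws \<circ> perm_word vs"
proof -
  have "perm_word (ws @ vs) = foldr (\<lambda>i f. transpose i (Suc i) \<circ> f) ws (perm_word vs)"
    unfolding perm_word_def by (simp only: foldr_append o_apply)
  then show ?thesis by (simp only: foldr_perm_word)
qed

lemma perm_word_permutes: "set ws \<subseteq> {i. Suc i < k} \<Longrightarrow> perm_word ws permutes {..<k}"
proof (induction ws)
  case Nil show ?case unfolding perm_word_Nil by (rule permutes_id)
next
  case (Cons i ws)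
  then have "transpose i (Suc i) permutes {..<k}" by (intro permutes_swap_id) auto
  with Cons show ?case unfolding perm_word_Cons by (intro permutes_compose) auto
qed

lemma perm_word_permutation: "permutation (perm_word ws)"
proof (induction ws)
  case (Cons i ws) then show ?case
    unfolding perm_word_Cons by (rule permutation_compose[OF permutation_swap_id])
qed simp

lemma sign_perm_word: "sign (perm_word ws) = (-1) ^ length ws"
proof (induction ws)
  case (Cons i ws) then show ?case
    unfolding perm_word_Cons sign_compose[OF permutation_swap_id perm_word_permutation]
    by (simp add: sign_swap_id)
qed (simp add: sign_id)

lemma transpose_word:
  assumes "Suc a + j < k"
  shows "\<exists>ws. set ws \<subseteq> {i. Suc i < k} \<and> perm_word ws = transpose a (Suc a + j)"
  using assms
proof (induction j)
  case 0
  then show ?case by (intro exI[of _ "[a]"]) (simp add: perm_word_Cons)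
next
  case (Suc j)
  then obtain ws where ws: "set ws \<subseteq> {i. Suc i < k}" "perm_word ws = transpose a (Suc a + j)" by auto
  let ?b = "Suc a + j"
  have "transpose ?b (Suc ?b) \<circ> transpose a ?b \<circ> transpose ?b (Suc ?b) = transpose a (Suc ?b)"
    by (auto simp: fun_eq_iff transpose_def)
  then have "perm_word ([?b] @ ws @ [?b]) = transpose a (Suc a + Suc j)"
    using ws by (simp add: perm_word_append perm_word_Cons o_assoc)
  moreover have "set ([?b] @ ws @ [?b]) \<subseteq> {i. Suc i < k}" using ws Suc.prems by auto
  ultimately show ?case by blast
qed

lemma transpose_word':
  assumes "a < k" "b < k"
  shows "\<exists>ws. set ws \<subseteq> {i. Suc i < k} \<and> perm_word ws = transpose a b"
proof (cases a b rule: linorder_cases)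
  case less
  then obtain j where "b = Suc a + j" using less_imp_Suc_add by fastforce
  then show ?thesis using transpose_word[of a j k] assms by auto
next
  case equal then show ?thesis by (intro exI[of _ "[]"]) simp
next
  case greater
  then obtain j where "a = Suc b + j" using less_imp_Suc_add by fastforce
  then show ?thesis using transpose_word[of b j k] assms by (auto simp: transpose_commute)
qed

lemma word_exists:
  assumes "\<sigma> permutes {..<k}"
  shows "\<exists>ws. set ws \<subseteq> {i. Suc i < k} \<and> perm_word ws = \<sigma>"
  using assms finite_lessThan
proof (induction rule: permutes_induct)
  case id then show ?case by (intro exI[of _ "[]"]) simp
next
  case (swap a b p)
  then obtain ws where ws: "set ws \<subseteq> {i. Suc i < k}" "perm_word ws = p" by auto
  obtain vs where vs: "set vs \<subseteq> {i. Suc i < k}" "perm_word vs = transpose a b"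
    using transpose_word'[of a k b] swap.hyps by auto
  show ?case using ws vs by (intro exI[of _ "vs @ ws"]) (simp add: perm_word_append)
qed




definition coef :: "nat \<Rightarrow> (nat \<Rightarrow> nat) \<Rightarrow> (nat \<Rightarrow> nat \<Rightarrow> complex) \<Rightarrow> nat list \<Rightarrow> complex" where
  "coef k \<sigma> q J = (\<Prod>x\<in>{..<k} \<times> {..<k}. (if fst x < snd x \<and> \<sigma> (snd x) < \<sigma> (fst x)
                       then q (J ! fst x) (J ! snd x) else 1))"

lemma coef_id: "coef k id q J = 1"
  unfolding coef_def by (rule prod.neutral) auto

lemma transpose_order:
  assumes "u \<noteq> v" "\<not> (u = i \<and> v = Suc i)" "\<not> (u = Suc i \<and> v = i)"
  shows "transpose i (Suc i) u < transpose i (Suc i) v \<longleftrightarrow> u < v"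
  using assms by (auto simp: transpose_def)

lemma coef_step:
  assumes \<sigma>: "\<sigma> permutes {..<k}" and a0: "a0 < k" "\<sigma> a0 = i" and b0: "b0 < k" "\<sigma> b0 = Suc i"
    and par: "q (J ! a0) (J ! b0) * q (J ! b0) (J ! a0) = 1"
  shows "coef k (transpose i (Suc i) \<circ> \<sigma>) q J = q (J ! a0) (J ! b0) * coef k \<sigma> q J"
proof -
  let ?t = "transpose i (Suc i) \<circ> \<sigma>"
  define g where "g \<tau> x = (if fst x < snd x \<and> \<tau> (snd x) < \<tau> (fst x) then q (J ! fst x) (J ! snd x) else 1)"
    for \<tau> :: "nat \<Rightarrow> nat" and x
  let ?S = "{..<k} \<times> {..<k}"
  let ?D = "{(a0, b0), (b0, a0)}"
  have ab: "a0 \<noteq> b0" using a0 b0 by auto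
  have DS: "?D \<subseteq> ?S" using a0 b0 by auto
  have inj: "inj \<sigma>" using permutes_inj[OF \<sigma>] .
  have same: "g ?t x = g \<sigma> x" if "x \<in> ?S - ?D" for x
  proof -
    obtain u v where x: "x = (u, v)" by (cases x)
    show ?thesis
    proof (cases "u < v")
      case True
      then have "\<sigma> u \<noteq> \<sigma> v" using inj by (simp add: inj_eq)
      moreover have "\<not> (\<sigma> v = i \<and> \<sigma> u = Suc i)"
      proof
        assume h: "\<sigma> v = i \<and> \<sigma> u = Suc i"
        then have "\<sigma> v = \<sigma> a0" "\<sigma> u = \<sigma> b0" using a0 b0 by simp_all
        then have "v = a0" "u = b0" using injD[OF inj] by blast+
        then show False using that x by simp
      qed
      moreover have "\<not> (\<sigma> v = Suc i \<and> \<sigma> u = i)"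
      proof
        assume h: "\<sigma> v = Suc i \<and> \<sigma> u = i"
        then have "\<sigma> v = \<sigma> b0" "\<sigma> u = \<sigma> a0" using a0 b0 by simp_all
        then have "v = b0" "u = a0" using injD[OF inj] by blast+
        then show False using that x by simp
      qed
      ultimately have "(?t v < ?t u) = (\<sigma> v < \<sigma> u)"
        using transpose_order[of "\<sigma> v" "\<sigma> u" i] by simp
      then show ?thesis using x by (simp add: g_def)
    next
      case False then show ?thesis using x by (simp add: g_def)
    qed
  qed
  have split: "prod (g \<tau>) ?S = prod (g \<tau>) ?D * prod (g \<tau>) (?S - ?D)" for \<tau>
    using prod.subset_diff[OF DS, of "g \<tau>"] by (simp add: mult.commute)
  have rest: "prod (g ?t) (?S - ?D) = prod (g \<sigma>) (?S - ?D)"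
    using same by (rule prod.cong[OF refl])
  have D2: "prod (g \<tau>) ?D = g \<tau> (a0, b0) * g \<tau> (b0, a0)" for \<tau>
    using ab by simp
  have cs: "coef k \<tau> q J = prod (g \<tau>) ?S" for \<tau> unfolding coef_def g_def by simp
  show ?thesis
  proof (cases "a0 < b0")
    case True
    have "g ?t (a0, b0) = q (J ! a0) (J ! b0)" "g ?t (b0, a0) = 1"
         "g \<sigma> (a0, b0) = 1" "g \<sigma> (b0, a0) = 1"
      using True a0 b0 by (auto simp: g_def)
    then show ?thesis unfolding cs split D2 rest by simp
  next
    case False
    then have ba: "b0 < a0" using ab by simp
    have "g ?t (a0, b0) = 1" "g ?t (b0, a0) = 1"
         "g \<sigma> (a0, b0) = 1" "g \<sigma> (b0, a0) = q (J ! b0) (J ! a0)"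
      using ba a0 b0 by (auto simp: g_def)
    then show ?thesis unfolding cs split D2 rest using par by (simp add: mult.assoc[symmetric])
  qed
qed

lemma Pword_Cons: "Pword emb d q (i # ws) = matmul d (adjP emb q i) (Pword emb d q ws)"
  by (simp add: Pword_def)

lemma Pword_formula:
  assumes E: "is_C_algebra emb" and par: "\<forall>x<d. \<forall>y<d. q x y * q y x = 1"
    and ws: "set ws \<subseteq> {i. Suc i < k}" and I: "I \<in> tuples d k" and J: "J \<in> tuples d k"
  shows "Pword emb d q ws I J = (if (\<forall>a<k. I ! perm_word ws a = J ! a)
            then emb (coef k (perm_word ws) q J) else 0)"
  using ws I
proof (induction ws arbitrary: I)
  case Nil
  have "(I = J) = (\<forall>a<k. I ! a = J ! a)"
    using Nil.prems J by (auto simp: tuples_def intro: nth_equalityI)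
  then show ?case unfolding perm_word_Nil coef_id by (simp add: Pword_def idmat_def emb_1[OF E])
next
  case (Cons i ws)
  let ?\<sigma> = "perm_word ws"
  have i: "Suc i < k" and ws: "set ws \<subseteq> {i. Suc i < k}" using Cons.prems by auto
  have \<sigma>: "?\<sigma> permutes {..<k}" using perm_word_permutes[OF ws] .
  have sI: "swapl i I \<in> tuples d k" using swapl_tuples[OF Cons.prems(2) i] .
  have lI: "length I = k" using Cons.prems by (simp add: tuples_def)
  have "Pword emb d q (i # ws) I J = emb (q (I ! Suc i) (I ! i)) * Pword emb d q ws (swapl i I) J"
    unfolding Pword_Cons using adjP_left[OF i Cons.prems(2)] .
  also have "\<dots> = emb (q (I ! Suc i) (I ! i)) * (if (\<forall>a<k. swapl i I ! ?\<sigma> a = J ! a)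
            then emb (coef k ?\<sigma> q J) else 0)"
    using Cons.IH[OF ws sI] by simp
  also have "(\<forall>a<k. swapl i I ! ?\<sigma> a = J ! a) = (\<forall>a<k. I ! perm_word (i # ws) a = J ! a)"
  proof -
    have "swapl i I ! ?\<sigma> a = I ! perm_word (i # ws) a" if "a < k" for a
    proof -
      have "?\<sigma> a < k" using permutes_in_image[OF \<sigma>] that by simp
      then show ?thesis using swapl_nth[of i I "?\<sigma> a"] i lI by (simp add: perm_word_Cons)
    qed
    then show ?thesis by auto
  qed
  finally have eq: "Pword emb d q (i # ws) I J = emb (q (I ! Suc i) (I ! i)) *
     (if \<forall>a<k. I ! perm_word (i # ws) a = J ! a then emb (coef k ?\<sigma> q J) else 0)" .
  show ?case
  proof (cases "\<forall>a<k. I ! perm_word (i # ws) a = J ! a")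
    case False then show ?thesis using eq unfolding if_not_P[OF False] by simp
  next
    case True
    define a0 where "a0 = inv ?\<sigma> i"
    define b0 where "b0 = inv ?\<sigma> (Suc i)"
    have inv\<sigma>: "inv ?\<sigma> permutes {..<k}" using permutes_inv[OF \<sigma>] .
    have a0: "a0 < k" "?\<sigma> a0 = i" using i permutes_in_image[OF inv\<sigma>, of i] permutes_inverses[OF \<sigma>]
      unfolding a0_def by auto
    have b0: "b0 < k" "?\<sigma> b0 = Suc i" using i permutes_in_image[OF inv\<sigma>, of "Suc i"] permutes_inverses[OF \<sigma>]
      unfolding b0_def by auto
    have "perm_word (i # ws) a0 = Suc i" "perm_word (i # ws) b0 = i"
      using a0 b0 by (simp_all add: perm_word_Cons)
    then have "I ! Suc i = J ! a0" "I ! i = J ! b0" using True a0(1) b0(1) by metis+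
    moreover have "J ! a0 \<in> set J" "J ! b0 \<in> set J" using J a0 b0 by (auto simp: tuples_def)
    moreover have "J ! a0 < d" "J ! b0 < d" using J calculation(3,4) by (auto simp: tuples_def)
    ultimately have "q (I ! Suc i) (I ! i) = q (J ! a0) (J ! b0)"
        "q (J ! a0) (J ! b0) * q (J ! b0) (J ! a0) = 1" using par by auto
    then have "emb (q (I ! Suc i) (I ! i)) * emb (coef k ?\<sigma> q J) = emb (coef k (perm_word (i # ws)) q J)"
      using coef_step[OF \<sigma> a0 b0] by (simp add: perm_word_Cons emb_mult[OF E, symmetric])
    then show ?thesis using eq unfolding if_P[OF True] by simp
  qed
qed

lemma Pword_unique:
  assumes "is_C_algebra emb" "\<forall>x<d. \<forall>y<d. q x y * q y x = 1"
    "set ws \<subseteq> {i. Suc i < k}" "set vs \<subseteq> {i. Suc i < k}" "perm_word ws = perm_word vs"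
    "I \<in> tuples d k" "J \<in> tuples d k"
  shows "Pword emb d q ws I J = Pword emb d q vs I J"
  unfolding Pword_formula[OF assms(1,2,3,6,7)] Pword_formula[OF assms(1,2,4,6,7)] assms(5) by (rule refl)




lemma Psigma_word:
  assumes "\<sigma> permutes {..<k}"
  shows "\<exists>ws. set ws \<subseteq> {i. Suc i < k} \<and> perm_word ws = \<sigma> \<and> Psigma emb d q k \<sigma> = Pword emb d q ws"
proof -
  let ?P = "\<lambda>ws. set ws \<subseteq> {i. Suc i < k} \<and> perm_word ws = \<sigma>"
  have "?P (SOME ws. ?P ws)" using someI_ex[OF word_exists[OF assms]] .
  then show ?thesis unfolding Psigma_def by blast
qed

lemma Psigma_Pword:
  assumes E: "is_C_algebra emb" and par: "\<forall>x<d. \<forall>y<d. q x y * q y x = 1"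
    and ws: "set ws \<subseteq> {i. Suc i < k}" and I: "I \<in> tuples d k" and J: "J \<in> tuples d k"
  shows "Psigma emb d q k (perm_word ws) I J = Pword emb d q ws I J"
proof -
  obtain vs where vs: "set vs \<subseteq> {i. Suc i < k}" "perm_word vs = perm_word ws"
    "Psigma emb d q k (perm_word ws) = Pword emb d q vs"
    using Psigma_word[OF perm_word_permutes[OF ws]] by blast
  show ?thesis using Pword_unique[OF E par vs(1) ws vs(2) I J] vs(3) by simp
qed

lemma Psigma_left:
  assumes E: "is_C_algebra emb" and par: "\<forall>x<d. \<forall>y<d. q x y * q y x = 1"
    and \<sigma>: "\<sigma> permutes {..<k}" and i: "Suc i < k" and I: "I \<in> tuples d k" and J: "J \<in> tuples d k"
  shows "matmul d (adjP emb q i) (Psigma emb d q k \<sigma>) I J = Psigma emb d q k (transpose i (Suc i) \<circ> \<sigma>) I J"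
proof -
  obtain ws where ws: "set ws \<subseteq> {i. Suc i < k}" "perm_word ws = \<sigma>" "Psigma emb d q k \<sigma> = Pword emb d q ws"
    using Psigma_word[OF \<sigma>] by blast
  have ws': "set (i # ws) \<subseteq> {i. Suc i < k}" using ws i by auto
  show ?thesis
    using Psigma_Pword[OF E par ws' I J] ws by (simp add: Pword_Cons perm_word_Cons)
qed

lemma Pword_snoc:
  assumes I: "I \<in> tuples d k" and J: "J \<in> tuples d k"
  shows "matmul d (Pword emb d q ws) (adjP emb q i) I J = Pword emb d q (ws @ [i]) I J"
  using I
proof (induction ws arbitrary: I)
  case Nil
  have "J \<in> tuples d (length I)" using Nil J by (simp add: tuples_def)
  then show ?case using matmul_id_left[OF Nil, of "adjP emb q i" J] matmul_id_right[of J d I "adjP emb q i"]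
    by (simp add: Pword_def)
next
  case (Cons j ws)
  have lI: "length I = k" using Cons.prems by (simp add: tuples_def)
  have "matmul d (Pword emb d q (j # ws)) (adjP emb q i) I J
      = matmul d (adjP emb q j) (matmul d (Pword emb d q ws) (adjP emb q i)) I J"
    unfolding Pword_Cons by (rule matmul_assoc)
  also have "\<dots> = matmul d (adjP emb q j) (Pword emb d q (ws @ [i])) I J"
    by (rule matmul_cong) (simp_all add: lI Cons.IH)
  finally show ?case by (simp add: Pword_Cons)
qed

lemma Psigma_right:
  assumes E: "is_C_algebra emb" and par: "\<forall>x<d. \<forall>y<d. q x y * q y x = 1"
    and \<sigma>: "\<sigma> permutes {..<k}" and i: "Suc i < k" and I: "I \<in> tuples d k" and J: "J \<in> tuples d k"
  shows "matmul d (Psigma emb d q k \<sigma>) (adjP emb q i) I J = Psigma emb d q k (\<sigma> \<circ> transpose i (Suc i)) I J"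
proof -
  obtain ws where ws: "set ws \<subseteq> {i. Suc i < k}" "perm_word ws = \<sigma>" "Psigma emb d q k \<sigma> = Pword emb d q ws"
    using Psigma_word[OF \<sigma>] by blast
  have ws': "set (ws @ [i]) \<subseteq> {i. Suc i < k}" using ws i by auto
  show ?thesis
    using Psigma_Pword[OF E par ws' I J] ws Pword_snoc[OF I J]
    by (simp add: perm_word_append perm_word_Cons)
qed

lemma matmul_sum_left:
  assumes "finite P"
  shows "matmul d (\<lambda>I J. c * (\<Sum>\<sigma>\<in>P. w \<sigma> * X \<sigma> I J)) Y I J
       = c * (\<Sum>\<sigma>\<in>P. w \<sigma> * matmul d (X \<sigma>) Y I J)"
proof -
  have "matmul d (\<lambda>I J. c * (\<Sum>\<sigma>\<in>P. w \<sigma> * X \<sigma> I J)) Y I J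
      = c * (\<Sum>L\<in>tuples d (length I). \<Sum>\<sigma>\<in>P. w \<sigma> * (X \<sigma> I L * Y L J))"
    by (simp add: matmul_def sum_distrib_left sum_distrib_right mult.assoc)
  also have "\<dots> = c * (\<Sum>\<sigma>\<in>P. \<Sum>L\<in>tuples d (length I). w \<sigma> * (X \<sigma> I L * Y L J))"
    by (subst sum.swap) (rule refl)
  also have "\<dots> = c * (\<Sum>\<sigma>\<in>P. w \<sigma> * matmul d (X \<sigma>) Y I J)"
    by (simp add: matmul_def sum_distrib_left)
  finally show ?thesis .
qed

lemma matmul_sum_right:
  assumes E: "is_C_algebra emb" and "finite P"
  shows "matmul d Y (\<lambda>I J. emb c * (\<Sum>\<sigma>\<in>P. emb (w \<sigma>) * X \<sigma> I J)) I J
       = emb c * (\<Sum>\<sigma>\<in>P. emb (w \<sigma>) * matmul d Y (X \<sigma>) I J)"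
proof -
  have "matmul d Y (\<lambda>I J. emb c * (\<Sum>\<sigma>\<in>P. emb (w \<sigma>) * X \<sigma> I J)) I J
      = (\<Sum>L\<in>tuples d (length I). \<Sum>\<sigma>\<in>P. emb c * (emb (w \<sigma>) * (Y I L * X \<sigma> L J)))"
    unfolding matmul_def sum_distrib_left
  proof (intro sum.cong refl)
    fix L \<sigma>
    show "Y I L * (emb c * (emb (w \<sigma>) * X \<sigma> L J)) = emb c * (emb (w \<sigma>) * (Y I L * X \<sigma> L J))"
      using emb_central[OF E, of "Y I L" c "emb (w \<sigma>) * X \<sigma> L J"]
        emb_central[OF E, of "Y I L" "w \<sigma>" "X \<sigma> L J"] by simp
  qed
  also have "\<dots> = (\<Sum>\<sigma>\<in>P. \<Sum>L\<in>tuples d (length I). emb c * (emb (w \<sigma>) * (Y I L * X \<sigma> L J)))"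
    by (rule sum.swap)
  also have "\<dots> = emb c * (\<Sum>\<sigma>\<in>P. emb (w \<sigma>) * matmul d Y (X \<sigma>) I J)"
    by (simp add: matmul_def sum_distrib_left)
  finally show ?thesis .
qed




lemma Antisymm_right:
  assumes E: "is_C_algebra emb" and par: "\<forall>x<d. \<forall>y<d. q x y * q y x = 1"
    and i: "Suc i < k" and I: "I \<in> tuples d k" and J: "J \<in> tuples d k"
  shows "matmul d (Antisymm emb d q k) (adjP emb q i) I J = - Antisymm emb d q k I J"
proof -
  let ?P = "{\<sigma>. \<sigma> permutes {..<k}}"
  let ?s = "transpose i (Suc i)"
  let ?c = "emb (1 / of_nat (fact k))"
  have s: "?s permutes {..<k}" using i by (intro permutes_swap_id) auto
  have fin: "finite ?P" by (rule finite_permutations) simp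
  have "matmul d (Antisymm emb d q k) (adjP emb q i) I J
      = ?c * (\<Sum>\<sigma>\<in>?P. emb (of_int (sign \<sigma>)) * matmul d (Psigma emb d q k \<sigma>) (adjP emb q i) I J)"
    unfolding Antisymm_def by (rule matmul_sum_left[OF fin])
  also have "\<dots> = ?c * (\<Sum>\<sigma>\<in>?P. emb (of_int (sign \<sigma>)) * Psigma emb d q k (\<sigma> \<circ> ?s) I J)"
    using Psigma_right[OF E par _ i I J] by simp
  also have "(\<Sum>\<sigma>\<in>?P. emb (of_int (sign \<sigma>)) * Psigma emb d q k (\<sigma> \<circ> ?s) I J)
      = (\<Sum>\<sigma>\<in>?P. emb (of_int (sign (\<sigma> \<circ> ?s))) * Psigma emb d q k (\<sigma> \<circ> ?s \<circ> ?s) I J)"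
    by (rule sum_permutations_compose_right[OF s])
  also have "\<dots> = (\<Sum>\<sigma>\<in>?P. - (emb (of_int (sign \<sigma>)) * Psigma emb d q k \<sigma> I J))"
  proof (rule sum.cong[OF refl])
    fix \<sigma> assume "\<sigma> \<in> ?P"
    then have "permutation \<sigma>" by (auto intro: permutes_imp_permutation)
    then have "sign (\<sigma> \<circ> ?s) = - sign \<sigma>"
      by (simp add: sign_compose permutation_swap_id sign_swap_id)
    moreover have "\<sigma> \<circ> ?s \<circ> ?s = \<sigma>" by (simp add: o_assoc[symmetric])
    ultimately show "emb (of_int (sign (\<sigma> \<circ> ?s))) * Psigma emb d q k (\<sigma> \<circ> ?s \<circ> ?s) I J
        = - (emb (of_int (sign \<sigma>)) * Psigma emb d q k \<sigma> I J)"
      by (simp add: emb_uminus[OF E])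
  qed
  finally show ?thesis by (simp add: Antisymm_def sum_negf)
qed

lemma Symm_alt: "is_C_algebra emb \<Longrightarrow> Symm emb d q k = (\<lambda>I J. emb (1 / of_nat (fact k)) *
      (\<Sum>\<sigma>\<in>{\<sigma>. \<sigma> permutes {..<k}}. emb 1 * Psigma emb d q k \<sigma> I J))"
  by (simp add: Symm_def emb_1)

lemma Symm_left:
  assumes E: "is_C_algebra emb" and par: "\<forall>x<d. \<forall>y<d. q x y * q y x = 1"
    and i: "Suc i < k" and I: "I \<in> tuples d k" and J: "J \<in> tuples d k"
  shows "matmul d (adjP emb q i) (Symm emb d q k) I J = Symm emb d q k I J"
proof -
  let ?P = "{\<sigma>. \<sigma> permutes {..<k}}"
  let ?s = "transpose i (Suc i)"
  let ?c = "emb (1 / of_nat (fact k))"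
  have s: "?s permutes {..<k}" using i by (intro permutes_swap_id) auto
  have fin: "finite ?P" by (rule finite_permutations) simp
  have "matmul d (adjP emb q i) (Symm emb d q k) I J
      = ?c * (\<Sum>\<sigma>\<in>?P. emb 1 * matmul d (adjP emb q i) (Psigma emb d q k \<sigma>) I J)"
    unfolding Symm_alt[OF E] by (rule matmul_sum_right[OF E fin])
  also have "\<dots> = ?c * (\<Sum>\<sigma>\<in>?P. Psigma emb d q k (?s \<circ> \<sigma>) I J)"
    using Psigma_left[OF E par _ i I J] by (simp add: emb_1[OF E])
  also have "(\<Sum>\<sigma>\<in>?P. Psigma emb d q k (?s \<circ> \<sigma>) I J) = (\<Sum>\<sigma>\<in>?P. Psigma emb d q k \<sigma> I J)"
    by (rule setum_permutations_compose_left[OF s, symmetric])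
  finally show ?thesis by (simp add: Symm_def)
qed




lemma lin4: "(a::'a::ab_group_add) - b + c - d = 0 \<Longrightarrow> b + d = a + c"
proof -
  assume "a - b + c - d = 0"
  then have "a + c = b + d" by (simp add: algebra_simps)
  then show ?thesis by simp
qed

lemma half_zero:
  fixes emb :: "complex \<Rightarrow> 'r::ring_1"
  assumes E: "is_C_algebra emb" and h: "(x::'r::ring_1) = - x"
  shows "x = 0"
proof -
  have "x = emb (1/2 + 1/2) * x" by (simp add: emb_1[OF E])
  also have "\<dots> = emb (1/2) * x + emb (1/2) * x" by (simp only: emb_add[OF E] distrib_right)
  also have "\<dots> = emb (1/2) * x + emb (1/2) * (- x)" using h by simp
  also have "\<dots> = 0" by simp
  finally show ?thesis .
qed

lemma par_of: "parametric_mat n q \<Longrightarrow> \<forall>x<n. \<forall>y<n. q x y * q y x = 1"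
  by (simp add: parametric_mat_def)

lemma fact_cancel:
  fixes emb :: "complex \<Rightarrow> 'r::ring_1"
  assumes E: "is_C_algebra emb"
  shows "emb (1 / of_nat (fact k)) * (of_nat (fact k) * (x::'r::ring_1)) = x"
proof -
  have "emb (1 / of_nat (fact k)) * of_nat (fact k) = emb (1 / of_nat (fact k)) * emb (of_nat (fact k))"
    by (simp only: emb_of_nat[OF E])
  also have "\<dots> = emb (1 / of_nat (fact k) * of_nat (fact k))"
    by (simp only: emb_mult[OF E])
  also have "\<dots> = 1" by (simp add: emb_1[OF E])
  finally show ?thesis by (simp add: mult.assoc[symmetric])
qed

lemma card_perms: "card {\<sigma>. \<sigma> permutes {..<k}} = fact k"
  by (rule card_permutations) simp_all

context
  fixes emb :: "complex \<Rightarrow> 'r::ring_1" and n m k :: nat and q p :: "nat \<Rightarrow> nat \<Rightarrow> complex"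
    and M :: "nat \<Rightarrow> nat \<Rightarrow> 'r"
  assumes E: "is_C_algebra emb" and pq: "parametric_mat n q" and pp: "parametric_mat m p"
    and man: "manin emb n m q p M"
begin

lemma C1:
  assumes i: "Suc i < k" and I: "I \<in> tuples n k" and J: "J \<in> tuples m k"
  shows "matmul m (matmul n (Antisymm emb n q k) (Mtensor M)) (adjP emb p i) I J
       = - matmul n (Antisymm emb n q k) (Mtensor M) I J"
proof -
  define U where "U I J = Mtensor M I J + matmul m (Mtensor M) (adjP emb p i) I J" for I J
  let ?A = "Antisymm emb n q k"
  have a: "matmul n (adjP emb q i) U I' J' = U I' J'" if I': "I' \<in> tuples n k" and J': "J' \<in> tuples m k" for I' J'
  proof -
    have lI: "length I' = k" "length (swapl i I') = k" using I' by (auto simp: tuples_def)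
    have "matmul n (adjP emb q i) U I' J' = emb (q (I' ! Suc i) (I' ! i)) * U (swapl i I') J'"
      by (rule adjP_left[OF i I'])
    also have "\<dots> = emb (q (I' ! Suc i) (I' ! i)) * Mtensor M (swapl i I') J'
        + emb (q (I' ! Suc i) (I' ! i)) * Mtensor M (swapl i I') (swapl i J') * emb (p (J' ! i) (J' ! Suc i))"
      unfolding U_def adjP_right[OF i J' lI(2)] by (simp add: distrib_left mult.assoc)
    also have "\<dots> = U I' J'"
      using lin4[OF local_manin[OF E man pq pp i I' J']] unfolding U_def adjP_right[OF i J' lI(1)]
      by simp
    finally show ?thesis .
  qed
  have lI: "length I = k" using I by (simp add: tuples_def)
  have "matmul n ?A U I J = matmul n ?A (matmul n (adjP emb q i) U) I J"
    by (rule matmul_cong) (auto simp: lI a J)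
  also have "\<dots> = matmul n (matmul n ?A (adjP emb q i)) U I J"
    by (rule matmul_assoc[symmetric])
  also have "\<dots> = matmul n (\<lambda>I J. - ?A I J) U I J"
    by (rule matmul_cong) (auto simp: lI Antisymm_right[OF E par_of[OF pq] i I])
  also have "\<dots> = - matmul n ?A U I J" by (rule matmul_uminus_left)
  finally have "matmul n ?A U I J = 0" by (rule half_zero[OF E])
  moreover have "matmul n ?A U I J = matmul n ?A (Mtensor M) I J
      + matmul m (matmul n ?A (Mtensor M)) (adjP emb p i) I J"
    unfolding U_def matmul_add_right[where Y = "Mtensor M"] matmul_assoc ..
  ultimately show ?thesis by (simp add: eq_neg_iff_add_eq_0 add.commute)
qed

lemma C1w:
  assumes ws: "set ws \<subseteq> {i. Suc i < k}" and I: "I \<in> tuples n k" and J: "J \<in> tuples m k"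
  shows "matmul m (matmul n (Antisymm emb n q k) (Mtensor M)) (Pword emb m p ws) I J
       = (-1) ^ length ws * matmul n (Antisymm emb n q k) (Mtensor M) I J"
  using ws J
proof (induction ws arbitrary: J)
  case Nil
  have "J \<in> tuples m (length I)" using Nil I by (simp add: tuples_def)
  then show ?case by (simp add: Pword_def matmul_id_right)
next
  case (Cons i ws)
  let ?X = "matmul n (Antisymm emb n q k) (Mtensor M)"
  have i: "Suc i < k" and ws: "set ws \<subseteq> {i. Suc i < k}" using Cons.prems by auto
  have lI: "length I = k" using I by (simp add: tuples_def)
  have "matmul m ?X (Pword emb m p (i # ws)) I J = matmul m (matmul m ?X (adjP emb p i)) (Pword emb m p ws) I J"
    unfolding Pword_Cons by (rule matmul_assoc[symmetric])
  also have "\<dots> = matmul m (\<lambda>I J. - ?X I J) (Pword emb m p ws) I J"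
    by (rule matmul_cong) (auto simp: lI C1[OF i I])
  also have "\<dots> = - matmul m ?X (Pword emb m p ws) I J" by (rule matmul_uminus_left)
  also have "\<dots> = (-1) ^ length (i # ws) * ?X I J" using Cons.IH[OF ws Cons.prems(2)] by simp
  finally show ?case .
qed

lemma Final1:
  assumes I: "I \<in> tuples n k" and J: "J \<in> tuples m k"
  shows "matmul m (matmul n (Antisymm emb n q k) (Mtensor M)) (Antisymm emb m p k) I J
       = matmul n (Antisymm emb n q k) (Mtensor M) I J"
proof -
  let ?X = "matmul n (Antisymm emb n q k) (Mtensor M)"
  let ?P = "{\<sigma>. \<sigma> permutes {..<k}}"
  have fin: "finite ?P" by (rule finite_permutations) simp
  have "matmul m ?X (Antisymm emb m p k) I J
      = emb (1 / of_nat (fact k)) * (\<Sum>\<sigma>\<in>?P. emb (of_int (sign \<sigma>)) * matmul m ?X (Psigma emb m p k \<sigma>) I J)"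
    unfolding Antisymm_def by (rule matmul_sum_right[OF E fin])
  also have "(\<Sum>\<sigma>\<in>?P. emb (of_int (sign \<sigma>)) * matmul m ?X (Psigma emb m p k \<sigma>) I J) = (\<Sum>\<sigma>\<in>?P. ?X I J)"
  proof (rule sum.cong[OF refl])
    fix \<sigma> assume "\<sigma> \<in> ?P"
    then obtain ws where ws: "set ws \<subseteq> {i. Suc i < k}" "perm_word ws = \<sigma>"
        "Psigma emb m p k \<sigma> = Pword emb m p ws"
      using Psigma_word by blast
    have "emb (of_int (sign \<sigma>)) = ((-1) ^ length ws :: 'r)"
      using sign_perm_word[of ws] ws(2) emb_of_int[OF E, of "sign \<sigma>"] by simp
    moreover have "((-1::'r) ^ length ws) * (-1) ^ length ws = 1"
      by (simp add: power_add[symmetric])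
    ultimately show "emb (of_int (sign \<sigma>)) * matmul m ?X (Psigma emb m p k \<sigma>) I J = ?X I J"
      using C1w[OF ws(1) I J] ws(3) by (simp add: mult.assoc[symmetric])
  qed
  also have "(\<Sum>\<sigma>\<in>?P. ?X I J) = of_nat (fact k) * ?X I J"
    by (simp add: card_perms)
  finally show ?thesis using fact_cancel[OF E] by simp
qed

lemma C2:
  assumes i: "Suc i < k" and I: "I \<in> tuples n k" and J: "J \<in> tuples m k"
  shows "matmul n (adjP emb q i) (matmul m (Mtensor M) (Symm emb m p k)) I J
       = matmul m (Mtensor M) (Symm emb m p k) I J"
proof -
  define V where "V I J = Mtensor M I J - matmul n (adjP emb q i) (Mtensor M) I J" for I J
  let ?S = "Symm emb m p k"
  have lI: "length I = k" using I by (simp add: tuples_def)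
  have a: "matmul m V (adjP emb p i) I J' = - V I J'" if J': "J' \<in> tuples m k" for J'
  proof -
    have "matmul m V (adjP emb p i) I J' = V I (swapl i J') * emb (p (J' ! i) (J' ! Suc i))"
      by (rule adjP_right[OF i J' lI])
    also have "\<dots> = Mtensor M I (swapl i J') * emb (p (J' ! i) (J' ! Suc i))
        - emb (q (I ! Suc i) (I ! i)) * Mtensor M (swapl i I) (swapl i J') * emb (p (J' ! i) (J' ! Suc i))"
      unfolding V_def adjP_left[OF i I] by (simp add: left_diff_distrib mult.assoc)
    also have "\<dots> = - V I J'"
    proof -
      have h: "Mtensor M I J' - emb (q (I ! Suc i) (I ! i)) * Mtensor M (swapl i I) J'
     + Mtensor M I (swapl i J') * emb (p (J' ! i) (J' ! Suc i))
     - emb (q (I ! Suc i) (I ! i)) * Mtensor M (swapl i I) (swapl i J') * emb (p (J' ! i) (J' ! Suc i)) = 0"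
        by (rule local_manin[OF E man pq pp i I J'])
      show ?thesis unfolding V_def adjP_left[OF i I] using h
        by (simp add: algebra_simps eq_neg_iff_add_eq_0)
    qed
    finally show ?thesis .
  qed
  have "matmul m V ?S I J = matmul m V (matmul m (adjP emb p i) ?S) I J"
    by (rule matmul_cong) (auto simp: lI Symm_left[OF E par_of[OF pp] i _ J])
  also have "\<dots> = matmul m (matmul m V (adjP emb p i)) ?S I J"
    by (rule matmul_assoc[symmetric])
  also have "\<dots> = matmul m (\<lambda>I J. - V I J) ?S I J"
    by (rule matmul_cong) (auto simp: lI a)
  also have "\<dots> = - matmul m V ?S I J" by (rule matmul_uminus_left)
  finally have "matmul m V ?S I J = 0" by (rule half_zero[OF E])
  moreover have "matmul m V ?S I J = matmul m (Mtensor M) ?S I J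
      - matmul n (adjP emb q i) (matmul m (Mtensor M) ?S) I J"
    unfolding V_def matmul_diff_left[where Y = "Mtensor M"] matmul_assoc ..
  ultimately show ?thesis by simp
qed

lemma C2w:
  assumes ws: "set ws \<subseteq> {i. Suc i < k}" and I: "I \<in> tuples n k" and J: "J \<in> tuples m k"
  shows "matmul n (Pword emb n q ws) (matmul m (Mtensor M) (Symm emb m p k)) I J
       = matmul m (Mtensor M) (Symm emb m p k) I J"
  using ws I
proof (induction ws arbitrary: I)
  case Nil
  then show ?case by (simp add: Pword_def matmul_id_left)
next
  case (Cons i ws)
  let ?Z = "matmul m (Mtensor M) (Symm emb m p k)"
  have i: "Suc i < k" and ws: "set ws \<subseteq> {i. Suc i < k}" using Cons.prems by auto
  have lI: "length I = k" using Cons.prems by (simp add: tuples_def)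
  have "matmul n (Pword emb n q (i # ws)) ?Z I J = matmul n (adjP emb q i) (matmul n (Pword emb n q ws) ?Z) I J"
    unfolding Pword_Cons by (rule matmul_assoc)
  also have "\<dots> = matmul n (adjP emb q i) ?Z I J"
    by (rule matmul_cong) (auto simp: lI Cons.IH[OF ws])
  also have "\<dots> = ?Z I J" by (rule C2[OF i Cons.prems(2) J])
  finally show ?case .
qed

lemma Final2:
  assumes I: "I \<in> tuples n k" and J: "J \<in> tuples m k"
  shows "matmul n (Symm emb n q k) (matmul m (Mtensor M) (Symm emb m p k)) I J
       = matmul m (Mtensor M) (Symm emb m p k) I J"
proof -
  let ?Z = "matmul m (Mtensor M) (Symm emb m p k)"
  let ?P = "{\<sigma>. \<sigma> permutes {..<k}}"
  have fin: "finite ?P" by (rule finite_permutations) simp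
  have "matmul n (Symm emb n q k) ?Z I J
      = emb (1 / of_nat (fact k)) * (\<Sum>\<sigma>\<in>?P. emb 1 * matmul n (Psigma emb n q k \<sigma>) ?Z I J)"
    unfolding Symm_alt[OF E] by (rule matmul_sum_left[OF fin])
  also have "(\<Sum>\<sigma>\<in>?P. emb 1 * matmul n (Psigma emb n q k \<sigma>) ?Z I J) = (\<Sum>\<sigma>\<in>?P. ?Z I J)"
  proof (rule sum.cong[OF refl])
    fix \<sigma> assume "\<sigma> \<in> ?P"
    then obtain ws where ws: "set ws \<subseteq> {i. Suc i < k}" "perm_word ws = \<sigma>"
        "Psigma emb n q k \<sigma> = Pword emb n q ws"
      using Psigma_word by blast
    show "emb 1 * matmul n (Psigma emb n q k \<sigma>) ?Z I J = ?Z I J"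
      using C2w[OF ws(1) I J] ws(3) by (simp add: emb_1[OF E])
  qed
  also have "(\<Sum>\<sigma>\<in>?P. ?Z I J) = of_nat (fact k) * ?Z I J"
    by (simp add: card_perms)
  finally show ?thesis using fact_cancel[OF E] by simp
qed

end

theorem mainTheorem7:
  fixes emb :: "complex \<Rightarrow> 'r::ring_1"
    and n m k :: nat
    and q p :: "nat \<Rightarrow> nat \<Rightarrow> complex"
    and M :: "nat \<Rightarrow> nat \<Rightarrow> 'r"
  assumes "is_C_algebra emb"
    and "parametric_mat n q" and "parametric_mat m p"
    and "manin emb n m q p M"
    and "k \<ge> 1"
  shows "\<forall>I\<in>tuples n k. \<forall>J\<in>tuples m k.
           matmul n (Antisymm emb n q k) (Mtensor M) I J
             = matmul m (matmul n (Antisymm emb n q k) (Mtensor M)) (Antisymm emb m p k) I J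
         \<and> matmul m (Mtensor M) (Symm emb m p k) I J
             = matmul m (matmul n (Symm emb n q k) (Mtensor M)) (Symm emb m p k) I J"
proof (intro ballI conjI)
  fix I J assume I: "I \<in> tuples n k" and J: "J \<in> tuples m k"
  show "matmul n (Antisymm emb n q k) (Mtensor M) I J
      = matmul m (matmul n (Antisymm emb n q k) (Mtensor M)) (Antisymm emb m p k) I J"
    using Final1[OF assms(1-4) I J] by simp
  show "matmul m (Mtensor M) (Symm emb m p k) I J
      = matmul m (matmul n (Symm emb n q k) (Mtensor M)) (Symm emb m p k) I J"
    using Final2[OF assms(1-4) I J] matmul_assoc[of m n "Symm emb n q k" "Mtensor M" "Symm emb m p k" I J]
    by simp
qed



end
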